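(* Let $M=\begin{pmatrix}a&b\\c&d\end{pmatrix}\in\mathrm{Mat}(2,\mathbb{Z})$ with $\mathrm{mgcd}(M)=r\neq0$. Then for all integers $n\ge2$, the reduction of $M$ mod $n$ is $\mathrm{Mat}(2,\mathbb{Z}_n)^\times$-conjugate to the reduction mod $n$ of the integer matrix $\begin{pmatrix}a&bc/r\\ r&d\end{pmatrix}$.
   Context: $\mathrm{mgcd}(M)=\gcd(b,c,d-a)\ge0$. $\mathbb{Z}_n=\mathbb{Z}/n\mathbb{Z}$ and $\mathrm{Mat}(2,\mathbb{Z}_n)^\times$ is the group of invertible $2\times2$ matrices over $\mathbb{Z}_n$. *)

theory Defs
  imports "HOL-Analysis.Analysis" "HOL-Number_Theory.Cong"
begin

text \<open>Integer 2x2 matrices are elements of type int^2^2; row i, column j is A$i$j.\<close>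

definition mat2 :: "int \<Rightarrow> int \<Rightarrow> int \<Rightarrow> int \<Rightarrow> int^2^2" where
  "mat2 a b c d = (\<chi> i j. if i = 1 then (if j = 1 then a else b) else (if j = 1 then c else d))"

definition mgcd :: "int^2^2 \<Rightarrow> int" where
  "mgcd M = gcd (M$1$2) (gcd (M$2$1) (M$2$2 - M$1$1))"

definition mat_cong :: "int \<Rightarrow> int^2^2 \<Rightarrow> int^2^2 \<Rightarrow> bool" where
  "mat_cong n A B \<longleftrightarrow> (\<forall>i j. [A$i$j = B$i$j] (mod n))"

text \<open>Reductions mod n of A and B are conjugate by an element of Mat(2,Z_n)^x:
  there are integer lifts P, Q of a unit and its inverse with P A Q = B mod n.\<close>
definition conj_mod :: "int \<Rightarrow> int^2^2 \<Rightarrow> int^2^2 \<Rightarrow> bool" where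
  "conj_mod n A B \<longleftrightarrow> (\<exists>P Q :: int^2^2.
      mat_cong n (P ** Q) (mat 1) \<and> mat_cong n (Q ** P) (mat 1) \<and>
      mat_cong n (P ** A ** Q) B)"

end

theory Submission imports Defs "HOL-Computational_Algebra.Primes" begin

lemma mat2_mult: "mat2 a b c d ** mat2 e f g h = mat2 (a*e+b*g) (a*f+b*h) (c*e+d*g) (c*f+d*h)"
  unfolding mat2_def matrix_matrix_mult_def
  by (simp add: vec_eq_iff forall_2 sum_2)

lemma mat1_2: "(mat 1 :: int^2^2) = mat2 1 0 0 1"
  unfolding mat2_def mat_def by (simp add: vec_eq_iff forall_2)

lemma mat_cong_mat2: "mat_cong n (mat2 a b c d) (mat2 a' b' c' d') \<longleftrightarrow>
  [a = a'] (mod n) \<and> [b = b'] (mod n) \<and> [c = c'] (mod n) \<and> [d = d'] (mod n)"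
  unfolding mat_cong_def mat2_def by (simp add: forall_2)

lemma form_coprime:
  fixes A B C :: int
  assumes g: "gcd A (gcd B C) = 1"
  shows "n > 0 \<Longrightarrow> \<exists>x y. coprime (A*x^2 + B*x*y + C*y^2) (int n)"
proof (induction n rule: less_induct)
  case (less n)
  show ?case
  proof (cases "n = 1")
    case True thus ?thesis by (rule_tac x=0 in exI, rule_tac x=0 in exI) simp
  next
    case False
    then obtain q where q: "prime q" "q dvd n" using prime_factor_nat by blast
    then obtain n1 where n1: "n = q * n1" by blast
    have n1pos: "n1 > 0" using less.prems n1 by (cases n1) auto
    have "n1 < n" using n1 n1pos prime_gt_1_nat[OF q(1)] by simp
    then obtain x y where xy: "coprime (A*x^2 + B*x*y + C*y^2) (int n1)" using less.IH n1pos by blast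
    have qi: "prime (int q)" using q(1) by simp
    have "\<exists>x0 y0. \<not> int q dvd (A*x0^2 + B*x0*y0 + C*y0^2)"
    proof (cases "int q dvd A")
      case False thus ?thesis by (rule_tac x=1 in exI, rule_tac x=0 in exI) simp
    next
      case qa: True
      show ?thesis
      proof (cases "int q dvd C")
        case False thus ?thesis by (rule_tac x=0 in exI, rule_tac x=1 in exI) simp
      next
        case qc: True
        have "\<not> int q dvd B"
        proof
          assume "int q dvd B"
          with qa qc have "int q dvd gcd A (gcd B C)" by simp
          with g qi show False by (simp add: prime_int_iff)
        qed
        thus ?thesis using qa qc
          by (rule_tac x=1 in exI, rule_tac x=1 in exI) (simp add: dvd_add_right_iff dvd_add_left_iff)
      qed
    qed
    then obtain x0 y0 where x0: "\<not> int q dvd (A*x0^2 + B*x0*y0 + C*y0^2)" by blast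
    show ?thesis
    proof (cases "int q dvd A*x^2 + B*x*y + C*y^2")
      case False
      hence "coprime (A*x^2 + B*x*y + C*y^2) (int q)"
        using qi by (simp add: prime_imp_coprime coprime_commute)
      thus ?thesis using xy n1 by (simp; blast)
    next
      case True
      have "\<not> int q dvd int n1"
      proof
        assume "int q dvd int n1"
        with True have "int q dvd gcd (A*x^2 + B*x*y + C*y^2) (int n1)" by simp
        with xy qi show False by (simp add: prime_int_iff)
      qed
      hence cop: "coprime (int q) (int n1)" using qi by (simp add: prime_imp_coprime)
      then obtain u v where uv: "u * int q + v * int n1 = 1"
        by (metis bezout_int coprime_iff_gcd_eq_1)
      define xx where "xx = x * u * int q + x0 * v * int n1"
      define yy where "yy = y * u * int q + y0 * v * int n1"
      have e1: "xx = x + int n1 * (v * (x0 - x))" "yy = y + int n1 * (v * (y0 - y))"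
        unfolding xx_def yy_def using uv by algebra+
      have e2: "xx = x0 + int q * (u * (x - x0))" "yy = y0 + int q * (u * (y - y0))"
        unfolding xx_def yy_def using uv by algebra+
      have c1: "[xx = x] (mod int n1)" "[yy = y] (mod int n1)"
        using e1 by (metis cong_iff_lin cong_sym)+
      have c2: "[xx = x0] (mod int q)" "[yy = y0] (mod int q)"
        using e2 by (metis cong_iff_lin cong_sym)+
      have "[A*xx^2 + B*xx*yy + C*yy^2 = A*x^2 + B*x*y + C*y^2] (mod int n1)"
        using c1 by (intro cong_add cong_mult cong_pow cong_refl)
      hence k1: "coprime (A*xx^2 + B*xx*yy + C*yy^2) (int n1)"
        using xy by (metis cong_imp_coprime cong_sym)
      have "[A*xx^2 + B*xx*yy + C*yy^2 = A*x0^2 + B*x0*y0 + C*y0^2] (mod int q)"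
        using c2 by (intro cong_add cong_mult cong_pow cong_refl)
      hence "\<not> int q dvd A*xx^2 + B*xx*yy + C*yy^2" using x0 cong_dvd_iff by blast
      hence "coprime (A*xx^2 + B*xx*yy + C*yy^2) (int q)"
        using qi by (simp add: prime_imp_coprime coprime_commute)
      thus ?thesis using k1 n1 by (simp; blast)
    qed
  qed
qed

lemma mat2_eqI: "a = a' \<Longrightarrow> b = b' \<Longrightarrow> c = c' \<Longrightarrow> d = d' \<Longrightarrow> mat2 a b c d = mat2 a' b' c' d'"
  by simp

lemma key_prod:
  fixes a r b1 c1 e1 x y s :: int
  defines "dl \<equiv> c1*x^2 + e1*x*y + (-b1)*y^2"
  shows "mat2 (s*(c1*x+e1*y)) (s*(-b1*y)) (s*(-y)) (s*x) ** mat2 a (r*b1) (r*c1) (a + r*e1)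
          ** mat2 x (b1*y) y (c1*x+e1*y)
        = mat2 ((s*dl)*a) ((s*dl)*(r*b1*c1)) ((s*dl)*r) ((s*dl)*(a+r*e1))"
    and "mat2 (s*(c1*x+e1*y)) (s*(-b1*y)) (s*(-y)) (s*x) ** mat2 x (b1*y) y (c1*x+e1*y)
        = mat2 (s*dl) 0 0 (s*dl)"
    and "mat2 x (b1*y) y (c1*x+e1*y) ** mat2 (s*(c1*x+e1*y)) (s*(-b1*y)) (s*(-y)) (s*x)
        = mat2 (s*dl) 0 0 (s*dl)"
  unfolding mat2_mult dl_def by (rule mat2_eqI; algebra)+

lemma cong_unit: "[k = 1] (mod n) \<Longrightarrow> [k * t = (t::int)] (mod n)"
  using cong_mult[of k 1 n t t] by simp

theorem proposition37:
  fixes a b c d r :: int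
  assumes "r = mgcd (mat2 a b c d)" and "r \<noteq> 0"
  shows "\<forall>n::int. n \<ge> 2 \<longrightarrow> conj_mod n (mat2 a b c d) (mat2 a (b * c div r) r d)"
proof (intro allI impI)
  fix n :: int assume n2: "n \<ge> 2"
  have r: "r = gcd b (gcd c (d - a))" using assms(1) unfolding mgcd_def mat2_def by simp
  have rpos: "r > 0" using r assms(2) by (metis gcd_ge_0_int order_le_less)
  define b1 where "b1 = b div r"
  define c1 where "c1 = c div r"
  define e1 where "e1 = (d - a) div r"
  have rb: "r dvd b" "r dvd c" "r dvd d - a" unfolding r by (meson dvd_trans gcd_dvd1 gcd_dvd2)+
  have hb: "b = r*b1" unfolding b1_def using rb by simp
  have hc: "c = r*c1" unfolding c1_def using rb by simp
  have he: "d - a = r*e1" unfolding e1_def using rb by simp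
  have hd: "d = a + r*e1" using he by simp
  have "r = gcd (r*b1) (gcd (r*c1) (r*e1))" using r hb hc he by simp
  also have "\<dots> = r * gcd b1 (gcd c1 e1)"
    by (metis gcd_mult_distrib_int abs_of_pos rpos)
  finally have g1: "gcd c1 (gcd e1 (-b1)) = 1" using rpos
    by (metis gcd.commute gcd.left_commute gcd_neg2_int mult_cancel_left1 order_less_irrefl)
  have "nat n > 0" using n2 by simp
  from form_coprime[OF g1 this] obtain x y where
    xy: "coprime (c1*x^2 + e1*x*y + (-b1)*y^2) (int (nat n))" by blast
  define dl where "dl = c1*x^2 + e1*x*y + (-b1)*y^2"
  have "coprime dl n" using xy n2 unfolding dl_def by simp
  then obtain s t where st: "s * dl + t * n = 1" by (metis bezout_int coprime_iff_gcd_eq_1)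
  have sd: "[s*dl = 1] (mod n)"
    by (metis st cong_iff_lin cong_sym mult.commute add.commute)
  have bc: "b * c div r = r*b1*c1" unfolding hb hc using rpos
    by (metis (no_types, lifting) mult.assoc mult.left_commute nonzero_mult_div_cancel_left order_less_irrefl)
  show "conj_mod n (mat2 a b c d) (mat2 a (b * c div r) r d)"
    unfolding conj_mod_def
  proof (intro exI conjI)
    let ?P = "mat2 (s*(c1*x+e1*y)) (s*(-b1*y)) (s*(-y)) (s*x)"
    let ?Q = "mat2 x (b1*y) y (c1*x+e1*y)"
    show "mat_cong n (?P ** ?Q) (mat 1)"
      unfolding key_prod(2) mat1_2 mat_cong_mat2 dl_def[symmetric]
      using sd by (simp add: cong_refl)
    show "mat_cong n (?Q ** ?P) (mat 1)"
      unfolding key_prod(3) mat1_2 mat_cong_mat2 dl_def[symmetric]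
      using sd by (simp add: cong_refl)
    show "mat_cong n (?P ** mat2 a b c d ** ?Q) (mat2 a (b * c div r) r d)"
      unfolding bc unfolding hb hc hd key_prod(1) mat_cong_mat2 dl_def[symmetric]
      using sd by (simp add: cong_unit)
  qed
qed

end
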